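(* (a) For $V=\mathbb F_2\mathbb Z_4$ with basis $x^0,x^1,x^2,x^3$ and $x^\mu\circ x^\nu=x^{\mu+\nu \bmod 4}$, the associated calculus on $\mathbb F_2[x^0,\dots,x^3]$ has exactly $8$ quantum metrics: the four metrics $g_m=\sum_\mu\mathrm dx^\mu\otimes\mathrm dx^{m-\mu}$ ($m=0,1,2,3$, indices mod 4) and the four metrics $g_m+c\otimes c$, where $c=\sum_\mu\mathrm dx^\mu$ (i.e. with all coefficients complemented $0\leftrightarrow1$). (b) For $V=A_2=\mathbb F_2[X]/\langle X^4-X\rangle$ with basis $x^\mu=X^\mu$, $\mu=0,1,2,3$ (so $x^0$ is the unit and $x^\mu\circ x^\nu=x^{\mu+\nu}$ if $\mu+\nu<4$, reduced using $x^4=x^1$ otherwise), the associated calculus on $\mathbb F_2[x^0,\dots,x^3]$ has exactly $3$ quantum metrics.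
   Context: Standing setup. Work over $\mathbb F_2$. Let $(V,\circ)$ be a commutative associative algebra over $\mathbb F_2$ with basis $x^1,\dots,x^n$ and structure constants $x^\mu\circ x^\nu=\sum_\rho V^{\mu\nu}{}_\rho x^\rho$. Let $A=\mathbb F_2[x^1,\dots,x^n]$ be the polynomial algebra on the same symbols. The associated differential calculus is the $A$-bimodule $\Omega^1$ which is free as a left $A$-module on $\mathrm dx^1,\dots,\mathrm dx^n$, with right action determined by $\mathrm dx^\mu\, x^\nu=x^\nu\,\mathrm dx^\mu+\sum_\rho V^{\mu\nu}{}_\rho\,\mathrm dx^\rho$, together with the unique map $\mathrm d:A\to\Omega^1$ satisfying the Leibniz rule, $\mathrm d(x^\mu)=\mathrm dx^\mu$, $\mathrm d1=0$. The bimodule $\Omega^1\otimes_A\Omega^1$ is free as a left module on $\mathrm dx^\mu\otimes\mathrm dx^\nu$. A quantum metric is $g=\sum_{\mu,\nu}g_{\mu\nu}\mathrm dx^\mu\otimes\mathrm dx^\nu$ with constants $g_{\mu\nu}\in\mathbb F_2$, $g_{\mu\nu}=g_{\nu\mu}$, the matrix $(g_{\mu\nu})$ invertible, and $g$ central: $x^\rho g=g x^\rho$ for all $\rho$. (Here the basis is indexed $0,\dots,3$; superscripts are labels, not exponents.) *)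

theory Defs
  imports Main "HOL-Library.Z2" "HOL-Library.Poly_Mapping"
begin

text \<open>The polynomial algebra
  A = F_2[x^0,...,x^(n-1)] is modelled by finitely supported maps from monomials
  (exponent vectors, finitely supported nat to nat) to coefficients (the usual Poly_Mapping
  representation of multivariate polynomials, with convolution product).\<close>

type_synonym F2 = bit
type_synonym polyA = "(nat \<Rightarrow>\<^sub>0 nat) \<Rightarrow>\<^sub>0 F2"

text \<open>Structure constants of (V,o): x^mu o x^nu = sum_rho V mu nu rho x^rho.\<close>
type_synonym structconst = "nat \<Rightarrow> nat \<Rightarrow> nat \<Rightarrow> F2"

definition varA :: "nat \<Rightarrow> polyA" where
  "varA r = Poly_Mapping.single (Poly_Mapping.single r 1) 1"

definition constA :: "F2 \<Rightarrow> polyA" where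
  "constA c = Poly_Mapping.single 0 c"

text \<open>Elements of Omega^1 (free left A-module on dx^0..dx^(n-1)) are given by
  coefficient functions w, meaning sum_{mu<n} w mu dx^mu.
  Elements of Omega^1 \<otimes>_A Omega^1 (free left A-module on dx^mu \<otimes> dx^nu) are given
  by coefficient functions T, meaning sum_{mu,nu<n} T mu nu dx^mu \<otimes> dx^nu.\<close>
type_synonym omega1 = "nat \<Rightarrow> polyA"
type_synonym omega2 = "nat \<Rightarrow> nat \<Rightarrow> polyA"

definition dxA :: "nat \<Rightarrow> omega1" where
  "dxA m = (\<lambda>k. if k = m then 1 else 0)"

text \<open>Right action of the generator x^r on Omega^1, from the defining relation
  (a dx^mu) x^r = a x^r dx^mu + sum_sigma a V^{mu r}_sigma dx^sigma.\<close>
definition rmul1 :: "nat \<Rightarrow> structconst \<Rightarrow> nat \<Rightarrow> omega1 \<Rightarrow> omega1" where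
  "rmul1 n V r w = (\<lambda>s. varA r * w s + (\<Sum>m<n. w m * constA (V m r s)))"

text \<open>Right action of x^r on Omega^1 \<otimes>_A Omega^1 (bimodule tensor product):
  (a dx^mu \<otimes> dx^nu) x^r = a dx^mu \<otimes> (dx^nu x^r)
     = a dx^mu \<otimes> (x^r dx^nu) + sum_sigma a V^{nu r}_sigma dx^mu \<otimes> dx^sigma
     = a (dx^mu x^r) \<otimes> dx^nu + sum_sigma a V^{nu r}_sigma dx^mu \<otimes> dx^sigma.\<close>
definition rmul2 :: "nat \<Rightarrow> structconst \<Rightarrow> nat \<Rightarrow> omega2 \<Rightarrow> omega2" where
  "rmul2 n V r T =
     (\<lambda>m s. \<Sum>p<n. \<Sum>q<n. T p q *
        ((if s = q then rmul1 n V r (dxA p) m else 0)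
         + (if m = p then constA (V q r s) else 0)))"

definition lmul2 :: "nat \<Rightarrow> omega2 \<Rightarrow> omega2" where
  "lmul2 r T = (\<lambda>m s. varA r * T m s)"

text \<open>A quantum metric: constant coefficients g_{mu nu} in F_2 (indices < n;
  g is zero outside that range so that it is a single well-defined object),
  symmetric, invertible, and central: x^r g = g x^r for all r < n.\<close>
definition quantum_metric :: "nat \<Rightarrow> structconst \<Rightarrow> (nat \<Rightarrow> nat \<Rightarrow> F2) \<Rightarrow> bool" where
  "quantum_metric n V g \<longleftrightarrow>
     (\<forall>i j. (n \<le> i \<or> n \<le> j) \<longrightarrow> g i j = 0)
   \<and> (\<forall>i j. g i j = g j i)
   \<and> (\<exists>h :: nat \<Rightarrow> nat \<Rightarrow> F2. \<forall>i<n. \<forall>j<n.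
        (\<Sum>k<n. g i k * h k j) = (if i = j then 1 else 0)
      \<and> (\<Sum>k<n. h i k * g k j) = (if i = j then 1 else 0))
   \<and> (\<forall>r<n. \<forall>i<n. \<forall>j<n.
        lmul2 r (\<lambda>a b. constA (g a b)) i j = rmul2 n V r (\<lambda>a b. constA (g a b)) i j)"

definition VZ4 :: structconst where
  "VZ4 m k r = (if m < 4 \<and> k < 4 \<and> r = (m + k) mod 4 then 1 else 0)"

text \<open>(b) A_2 = F_2[X]/(X^4 - X), x^mu = X^mu: x^mu o x^nu = x^{mu+nu} if
  mu+nu < 4, otherwise reduced with x^4 = x^1, i.e. x^{mu+nu-3}.\<close>
definition VA2 :: structconst where
  "VA2 m k r = (if m < 4 \<and> k < 4 \<and>
                   r = (if m + k < 4 then m + k else m + k - 3) then 1 else 0)"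

definition gZ4 :: "nat \<Rightarrow> nat \<Rightarrow> nat \<Rightarrow> F2" where
  "gZ4 m i j = (if i < 4 \<and> j < 4 \<and> (i + j) mod 4 = m then 1 else 0)"

definition gZ4c :: "nat \<Rightarrow> nat \<Rightarrow> nat \<Rightarrow> F2" where
  "gZ4c m i j = (if i < 4 \<and> j < 4 then gZ4 m i j + 1 else 0)"

end

theory Submission
  imports Defs
begin


lemma constA_add: "constA (a + b) = constA a + constA b"
  by (simp only: constA_def single_add)
lemma constA_mult: "constA (a * b) = constA a * constA b"
  by (simp only: constA_def mult_single add_0)
lemma constA_0[simp]: "constA 0 = 0" by (simp add: constA_def)
lemma constA_sum: "constA (sum f A) = (\<Sum>x\<in>A. constA (f x))"
  by (induction A rule: infinite_finite_induct) (auto simp: constA_add simp del: add_bit_eq_xor)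
lemma constA_eq0: "(constA a = 0) = (a = 0)"
  unfolding constA_def by (metis inj_single injD single_zero)

lemma if1_mult: "(if c then 1 else 0) * y = (if c then y else (0::'a::semiring_1))" by simp
lemma mult_if1: "y * (if c then 1 else 0) = (if c then y else (0::'a::semiring_1))" by simp

lemma rmul1_dx: "p < n \<Longrightarrow> rmul1 n V r (dxA p) m = varA r * (if m = p then 1 else 0) + constA (V p r m)"
  unfolding rmul1_def dxA_def
  by (simp add: if1_mult)

lemma central_iff:
  assumes "i < n" "j < n"
  shows "(lmul2 r (\<lambda>a b. constA (g a b)) i j = rmul2 n V r (\<lambda>a b. constA (g a b)) i j)
     = ((\<Sum>p<n. g p j * V p r i) + (\<Sum>q<n. g i q * V q r j) = 0)"
proof -
  have "rmul2 n V r (\<lambda>a b. constA (g a b)) i j =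
     (\<Sum>p<n. constA (g p j) * rmul1 n V r (dxA p) i) + (\<Sum>q<n. constA (g i q) * constA (V q r j))"
    unfolding rmul2_def
    by (simp add: distrib_left sum.distrib assms if_distrib[where f="\<lambda>x. y * x" for y] sum.swap[where A="{..<n}"] cong: if_cong)
  also have "\<dots> = (\<Sum>p<n. constA (g p j) * (varA r * (if i = p then 1 else 0))) + constA ((\<Sum>p<n. g p j * V p r i) + (\<Sum>q<n. g i q * V q r j))"
    by (simp add: rmul1_dx distrib_left sum.distrib constA_add constA_sum constA_mult add.assoc del: add_bit_eq_xor mult_bit_eq_and)
  also have "(\<Sum>p<n. constA (g p j) * (varA r * (if i = p then 1 else 0))) = varA r * constA (g i j)"
    by (simp add: assms mult_if1 if_distrib[where f="\<lambda>x. y * x" for y] mult.commute cong: if_cong)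
  finally show ?thesis unfolding lmul2_def
    by (simp add: constA_eq0)
qed

lemma sum4: "(\<Sum>p<4. f p) = f 0 + f 1 + f 2 + f (3::nat)"
  by (simp add: numeral_eq_Suc lessThan_Suc add.assoc add.commute add.left_commute)
lemma all4: "(\<forall>i<4. P i) = (P 0 \<and> P 1 \<and> P 2 \<and> P (3::nat))"
  by (auto simp: numeral_eq_Suc less_Suc_eq)
lemma bit_add_eq0: "((a::bit) + b = 0) = (a = b)"
  by (metis add_bit_eq_xor bit_not_one_iff bit_not_zero_iff xor.commute xor.left_neutral xor_self_eq)


lemma QM_iff: "quantum_metric n V g = ((\<forall>i j. (n \<le> i \<or> n \<le> j) \<longrightarrow> g i j = 0) \<and> (\<forall>i j. g i j = g j i)
   \<and> (\<exists>h :: nat \<Rightarrow> nat \<Rightarrow> F2. \<forall>i<n. \<forall>j<n.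
        (\<Sum>k<n. g i k * h k j) = (if i = j then 1 else 0)
      \<and> (\<Sum>k<n. h i k * g k j) = (if i = j then 1 else 0))
   \<and> (\<forall>r<n. \<forall>i<n. \<forall>j<n. (\<Sum>p<n. g p j * V p r i) + (\<Sum>q<n. g i q * V q r j) = 0))"
  unfolding quantum_metric_def by (simp add: central_iff cong: conj_cong)

lemma kernel:
  fixes n :: nat
  assumes H: "\<forall>i<n. \<forall>j<n. (\<Sum>k<n. h i k * g k j) = (if i = j then 1 else (0::'a::comm_ring_1))"
    and K: "\<forall>k<n. (\<Sum>j<n. g k j * v j) = 0" and i: "i < n"
  shows "v i = 0"
proof -
  have "v i = (\<Sum>j<n. (if i = j then 1 else 0) * v j)" using i by (simp add: if1_mult sum.delta')
  also have "\<dots> = (\<Sum>j<n. (\<Sum>k<n. h i k * g k j) * v j)" using H i by simp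
  also have "\<dots> = (\<Sum>j<n. \<Sum>k<n. h i k * (g k j * v j))"
    by (simp add: sum_distrib_right mult.assoc)
  also have "\<dots> = (\<Sum>k<n. \<Sum>j<n. h i k * (g k j * v j))"
    by (rule sum.swap)
  also have "\<dots> = (\<Sum>k<n. h i k * (\<Sum>j<n. g k j * v j))"
    by (simp add: sum_distrib_left)
  also have "\<dots> = 0" using K by simp
  finally show ?thesis .
qed

lemma mods4: "((0::nat) + 0) mod 4 = 0" "((0::nat) + 1) mod 4 = 1" "((0::nat) + 2) mod 4 = 2" "((0::nat) + 3) mod 4 = 3" "((1::nat) + 0) mod 4 = 1" "((1::nat) + 1) mod 4 = 2" "((1::nat) + 2) mod 4 = 3" "((1::nat) + 3) mod 4 = 0" "((2::nat) + 0) mod 4 = 2" "((2::nat) + 1) mod 4 = 3" "((2::nat) + 2) mod 4 = 0" "((2::nat) + 3) mod 4 = 1" "((3::nat) + 0) mod 4 = 3" "((3::nat) + 1) mod 4 = 0" "((3::nat) + 2) mod 4 = 1" "((3::nat) + 3) mod 4 = 2" by simp_all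

lemma Z4_form:
  assumes Q: "quantum_metric 4 VZ4 g"
  shows "g = (\<lambda>i j. if i < 4 \<and> j < 4 then g 0 ((i + j) mod 4) else 0)"
proof -
  from Q[unfolded QM_iff] have Z: "\<forall>i j. (4 \<le> i \<or> 4 \<le> j) \<longrightarrow> g i j = 0"
    and S: "\<forall>i j. g i j = g j i"
    and C: "\<forall>r<4. \<forall>i<4. \<forall>j<4. (\<Sum>p<4. g p j * VZ4 p r i) + (\<Sum>q<4. g i q * VZ4 q r j) = 0"
    by auto
  have f10: "g 1 0 = g 0 1" using C[rule_format, of 1 1 1] by (simp add: sum4 VZ4_def bit_add_eq0 S del: add_bit_eq_xor mult_bit_eq_and)
  have f11: "g 1 1 = g 0 2" using C[rule_format, of 1 1 2] by (simp add: sum4 VZ4_def bit_add_eq0 S del: add_bit_eq_xor mult_bit_eq_and)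
  have f12: "g 1 2 = g 0 3" using C[rule_format, of 1 1 3] by (simp add: sum4 VZ4_def bit_add_eq0 S del: add_bit_eq_xor mult_bit_eq_and)
  have f13: "g 1 3 = g 0 0" using C[rule_format, of 1 1 0] by (simp add: sum4 VZ4_def bit_add_eq0 S del: add_bit_eq_xor mult_bit_eq_and)
  have f20: "g 2 0 = g 0 2" using C[rule_format, of 2 2 2] by (simp add: sum4 VZ4_def bit_add_eq0 S del: add_bit_eq_xor mult_bit_eq_and)
  have f21: "g 2 1 = g 0 3" using C[rule_format, of 2 2 3] by (simp add: sum4 VZ4_def bit_add_eq0 S del: add_bit_eq_xor mult_bit_eq_and)
  have f22: "g 2 2 = g 0 0" using C[rule_format, of 2 2 0] by (simp add: sum4 VZ4_def bit_add_eq0 S del: add_bit_eq_xor mult_bit_eq_and)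
  have f23: "g 2 3 = g 0 1" using C[rule_format, of 2 2 1] by (simp add: sum4 VZ4_def bit_add_eq0 S del: add_bit_eq_xor mult_bit_eq_and)
  have f30: "g 3 0 = g 0 3" using C[rule_format, of 3 3 3] by (simp add: sum4 VZ4_def bit_add_eq0 S del: add_bit_eq_xor mult_bit_eq_and)
  have f31: "g 3 1 = g 0 0" using C[rule_format, of 3 3 0] by (simp add: sum4 VZ4_def bit_add_eq0 S del: add_bit_eq_xor mult_bit_eq_and)
  have f32: "g 3 2 = g 0 1" using C[rule_format, of 3 3 1] by (simp add: sum4 VZ4_def bit_add_eq0 S del: add_bit_eq_xor mult_bit_eq_and)
  have f33: "g 3 3 = g 0 2" using C[rule_format, of 3 3 2] by (simp add: sum4 VZ4_def bit_add_eq0 S del: add_bit_eq_xor mult_bit_eq_and)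
  have "\<forall>i<4. \<forall>j<4. g i j = g 0 ((i + j) mod 4)"
    apply (simp only: all4 mods4) 
    by (simp only: f10 f11 f12 f13 f20 f21 f22 f23 f30 f31 f32 f33 simp_thms)
  note E = this
  show ?thesis
  proof (intro ext)
    fix i j :: nat
    show "g i j = (if i < 4 \<and> j < 4 then g 0 ((i + j) mod 4) else 0)"
    proof (cases "i < 4 \<and> j < 4")
      case True thus ?thesis using E[rule_format, of i j] by (simp only: if_True simp_thms)
    next
      case False thus ?thesis using Z by auto
    qed
  qed
qed

lemma ex4: "(\<exists>i<4. P i) = (P 0 \<or> P 1 \<or> P 2 \<or> P (3::nat))"
  by (auto simp: numeral_eq_Suc less_Suc_eq)

lemma bit01: "(x::bit) = 0 \<or> x = 1" by (cases "x = 0") auto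

lemma pick:
  assumes "F 0 + F 1 + F 2 + F (3::nat) = (1::bit)"
  shows "\<exists>m<4. (\<forall>k<4. F k = (if k = m then 1 else 0)) \<or> (\<forall>k<4. F k = (if k = m then 0 else 1))"
  using assms bit01[of "F 0"] bit01[of "F 1"] bit01[of "F 2"] bit01[of "F 3"]
  by (simp only: ex4 all4) auto

lemma char1:
  assumes "\<forall>k<4. F k = (if k = m then 1 else 0)"
  shows "(\<lambda>i j. if i < 4 \<and> j < 4 then F ((i + j) mod 4) else 0) = gZ4 m"
  using assms by (auto simp: fun_eq_iff gZ4_def)

lemma char2:
  assumes "\<forall>k<4. F k = (if k = m then 0 else 1)"
  shows "(\<lambda>i j. if i < 4 \<and> j < 4 then F ((i + j) mod 4) else 0) = gZ4c m"
  using assms by (auto simp: fun_eq_iff gZ4c_def gZ4_def)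

lemma Z4_sub:
  assumes Q: "quantum_metric 4 VZ4 g"
  shows "g \<in> gZ4 ` {0..<4} \<union> gZ4c ` {0..<4}"
proof -
  have G: "g = (\<lambda>i j. if i < 4 \<and> j < 4 then g 0 ((i + j) mod 4) else 0)" by (rule Z4_form[OF Q])
  from Q[unfolded QM_iff] obtain h where H: "\<forall>i<4. \<forall>j<4. (\<Sum>k<4. h i k * g k j) = (if i = j then 1 else (0::bit))"
    by blast
  have par: "g 0 0 + g 0 1 + g 0 2 + g 0 3 = 1"
  proof (rule ccontr)
    assume "g 0 0 + g 0 1 + g 0 2 + g 0 3 \<noteq> 1"
    hence P0: "g 0 0 + g 0 1 + g 0 2 + g 0 3 = 0" using bit01 by blast
    have "\<forall>k<4. (\<Sum>j<4. g k j * (\<lambda>_. 1::bit) j) = 0"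
      apply (subst G)
      apply (simp only: all4 sum4 mods4 mult_1_right if_True simp_thms)
      using P0 by (simp add: ac_simps del: add_bit_eq_xor mult_bit_eq_and)
    from kernel[OF H this, of 0] show False by simp
  qed
  from pick[of "g 0", OF par] obtain m where m: "m < 4" and
    D: "(\<forall>k<4. g 0 k = (if k = m then 1 else 0)) \<or> (\<forall>k<4. g 0 k = (if k = m then 0 else 1))"
    by blast
  from D show ?thesis
  proof
    assume "\<forall>k<4. g 0 k = (if k = m then 1 else 0)"
    from char1[OF this] G have "g = gZ4 m" by simp
    thus ?thesis using m by auto
  next
    assume "\<forall>k<4. g 0 k = (if k = m then 0 else 1)"
    from char2[OF this] G have "g = gZ4c m" by simp
    thus ?thesis using m by auto
  qed
qed

lemma Z4_inv: "\<forall>m<4. \<forall>i<4. \<forall>j<4. (\<Sum>k<4. gZ4 m i k * gZ4 m k j) = (if i = j then 1 else 0)"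
  by (simp add: all4 sum4 gZ4_def)
lemma Z4c_inv: "\<forall>m<4. \<forall>i<4. \<forall>j<4. (\<Sum>k<4. gZ4c m i k * gZ4c m k j) = (if i = j then 1 else 0)"
  by (simp add: all4 sum4 gZ4c_def gZ4_def)
lemma Z4_cen: "\<forall>m<4. \<forall>r<4. \<forall>i<4. \<forall>j<4. (\<Sum>p<4. gZ4 m p j * VZ4 p r i) + (\<Sum>q<4. gZ4 m i q * VZ4 q r j) = 0"
  by (simp add: all4 sum4 gZ4_def VZ4_def)
lemma Z4c_cen: "\<forall>m<4. \<forall>r<4. \<forall>i<4. \<forall>j<4. (\<Sum>p<4. gZ4c m p j * VZ4 p r i) + (\<Sum>q<4. gZ4c m i q * VZ4 q r j) = 0"
  by (simp add: all4 sum4 gZ4c_def gZ4_def VZ4_def)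

lemma Z4_QM: "m < 4 \<Longrightarrow> quantum_metric 4 VZ4 (gZ4 m)"
  unfolding QM_iff
  apply (intro conjI)
     apply (simp add: gZ4_def)
    apply (simp add: gZ4_def add.commute conj_commute)
   apply (rule exI[of _ "gZ4 m"]) using Z4_inv apply simp
  using Z4_cen by simp

lemma Z4c_QM: "m < 4 \<Longrightarrow> quantum_metric 4 VZ4 (gZ4c m)"
  unfolding QM_iff
  apply (intro conjI)
     apply (simp add: gZ4c_def)
    apply (simp add: gZ4c_def gZ4_def add.commute conj_commute)
   apply (rule exI[of _ "gZ4c m"]) using Z4c_inv apply simp
  using Z4c_cen by simp

lemma Z4_set: "{g. quantum_metric 4 VZ4 g} = gZ4 ` {0..<4} \<union> gZ4c ` {0..<4}"
  using Z4_sub Z4_QM Z4c_QM by auto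

lemma Z4_card: "card (gZ4 ` {0..<4} \<union> gZ4c ` {0..<4}) = 8"
proof -
  have d1: "\<forall>a<4. \<forall>b<4. a \<noteq> b \<longrightarrow> gZ4 a 0 a \<noteq> gZ4 b 0 a" by (simp add: all4 gZ4_def)
  have d2: "\<forall>a<4. \<forall>b<4. a \<noteq> b \<longrightarrow> gZ4c a 0 a \<noteq> gZ4c b 0 a" by (simp add: all4 gZ4c_def gZ4_def)
  have d3: "\<forall>a<4. \<forall>b<4. \<exists>k<4. gZ4 a 0 k \<noteq> gZ4c b 0 k" by (simp add: all4 ex4 gZ4c_def gZ4_def)
  have i1: "inj_on gZ4 {0..<4}"
    by (rule inj_onI) (metis atLeastLessThan_iff d1)
  have i2: "inj_on gZ4c {0..<4}"
    by (rule inj_onI) (metis atLeastLessThan_iff d2)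
  have dj: "gZ4 ` {0..<4} \<inter> gZ4c ` {0..<4} = {}"
    using d3 by fastforce
  show ?thesis
    by (simp add: card_Un_disjoint dj card_image i1 i2)
qed

definition mat4 :: "bit list list \<Rightarrow> nat \<Rightarrow> nat \<Rightarrow> bit" where
  "mat4 L i j = (if i < 4 \<and> j < 4 then L ! i ! j else 0)"

definition GA :: "bit \<Rightarrow> bit \<Rightarrow> bit \<Rightarrow> bit \<Rightarrow> nat \<Rightarrow> nat \<Rightarrow> bit" where
  "GA a b c d = mat4 [[a,0,0,a],[0,b,c,d],[0,c,d,b],[a,d,b,a+c]]"

lemma bit_solve: "(x::bit) + y + z = 0 \<Longrightarrow> y = x + z"
  by (metis add.assoc add.commute add_0 bit_add_eq0)

lemma A2_form:
  assumes Q: "quantum_metric 4 VA2 g"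
  shows "g = GA (g 0 0) (g 1 1) (g 1 2) (g 2 2)"
proof -
  from Q[unfolded QM_iff] have Z: "\<forall>i j. (4 \<le> i \<or> 4 \<le> j) \<longrightarrow> g i j = 0"
    and S: "\<forall>i j. g i j = g j i"
    and C: "\<forall>r<4. \<forall>i<4. \<forall>j<4. (\<Sum>p<4. g p j * VA2 p r i) + (\<Sum>q<4. g i q * VA2 q r j) = 0"
    by auto
  have e1: "g 0 1 = 0" using C[rule_format, of 1 0 2] by (simp add: sum4 VA2_def)
  have e2: "g 0 2 = 0" using C[rule_format, of 1 0 3] by (simp add: sum4 VA2_def)
  have e3: "g 0 3 = g 0 0" using C[rule_format, of 1 0 1] by (simp add: sum4 VA2_def bit_add_eq0 del: add_bit_eq_xor mult_bit_eq_and)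
  have e4: "g 2 3 = g 1 1" using C[rule_format, of 2 1 3] by (simp add: sum4 VA2_def bit_add_eq0 del: add_bit_eq_xor mult_bit_eq_and)
  have e5: "g 1 3 = g 2 2" using C[rule_format, of 1 2 3] by (simp add: sum4 VA2_def bit_add_eq0 del: add_bit_eq_xor mult_bit_eq_and)
  have e6': "g 0 3 + g 3 3 + g 1 2 = 0" using C[rule_format, of 1 1 3]
    by (simp add: sum4 VA2_def del: add_bit_eq_xor mult_bit_eq_and)
  have e6: "g 3 3 = g 0 0 + g 1 2" using bit_solve[OF e6'] e3 by simp
  have E: "\<forall>i<4. \<forall>j<4. g i j = [[g 0 0,0,0,g 0 0],[0,g 1 1,g 1 2,g 2 2],[0,g 1 2,g 2 2,g 1 1],[g 0 0,g 2 2,g 1 1,g 0 0+g 1 2]] ! i ! j"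
    apply (simp only: all4)
    using e1 e2 e3 e4 e5 e6 S[rule_format, of 1 0] S[rule_format, of 2 0] S[rule_format, of 3 0]
      S[rule_format, of 2 1] S[rule_format, of 3 1] S[rule_format, of 3 2] by simp
  show ?thesis
  proof (intro ext)
    fix i j :: nat
    show "g i j = GA (g 0 0) (g 1 1) (g 1 2) (g 2 2) i j"
    proof (cases "i < 4 \<and> j < 4")
      case True thus ?thesis using E[rule_format, of i j] unfolding GA_def mat4_def by (simp only: if_True simp_thms)
    next
      case False thus ?thesis using Z unfolding GA_def mat4_def by auto
    qed
  qed
qed

lemma no4: "(\<forall>i::nat. \<not> i < 4) = False" by (auto intro: exI[of _ 0])

lemma A2_cls:
  assumes H: "\<forall>i<4. \<forall>j<4. (\<Sum>k<4. h i k * GA a b c d k j) = (if i = j then 1 else (0::bit))"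
  shows "GA a b c d \<in> {GA 1 0 0 1, GA 1 0 1 0, GA 1 1 0 0}"
proof -
  have KK: "\<And>v. \<forall>k<4. (\<Sum>j<4. GA a b c d k j * v j) = 0 \<Longrightarrow> \<forall>i<4. v i = 0"
    using kernel[OF H] by blast
  show ?thesis
    using bit01[of a] bit01[of b] bit01[of c] bit01[of d]
    apply (elim disjE)
    apply (insert KK[of "(\<lambda>k::nat. if k = 0 then 1 else (0::bit))"] KK[of "(\<lambda>k::nat. 1::bit)"] KK[of "(\<lambda>k::nat. if k = 2 then 1 else (0::bit))"] KK[of "(\<lambda>k::nat. if k = 1 \<or> k = 2 then 1 else (0::bit))"])
    apply (simp_all add: all4 sum4 GA_def mat4_def no4)
    done
qed

lemma symA_001: "\<forall>i<4. \<forall>j<4. GA 1 0 0 1 i j = GA 1 0 0 1 j i"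
  by (simp add: all4 GA_def mat4_def)

lemma A2_QM_001: "quantum_metric 4 VA2 (GA 1 0 0 1)"
  unfolding QM_iff
  apply (intro conjI)
     apply (simp add: GA_def mat4_def)
    apply (intro allI)
    subgoal for i j
      using symA_001[rule_format, of i j] by (cases "i < 4 \<and> j < 4") (auto simp: GA_def mat4_def)
   apply (rule exI[of _ "mat4 [[1,1,0,0],[1,0,0,1],[0,0,1,0],[0,1,0,0]]"])
   apply (simp add: all4 sum4 GA_def mat4_def)
  apply (simp add: all4 sum4 GA_def mat4_def VA2_def)
  done

lemma symA_010: "\<forall>i<4. \<forall>j<4. GA 1 0 1 0 i j = GA 1 0 1 0 j i"
  by (simp add: all4 GA_def mat4_def)

lemma A2_QM_010: "quantum_metric 4 VA2 (GA 1 0 1 0)"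
  unfolding QM_iff
  apply (intro conjI)
     apply (simp add: GA_def mat4_def)
    apply (intro allI)
    subgoal for i j
      using symA_010[rule_format, of i j] by (cases "i < 4 \<and> j < 4") (auto simp: GA_def mat4_def)
   apply (rule exI[of _ "mat4 [[0,0,0,1],[0,0,1,0],[0,1,0,0],[1,0,0,1]]"])
   apply (simp add: all4 sum4 GA_def mat4_def)
  apply (simp add: all4 sum4 GA_def mat4_def VA2_def)
  done

lemma symA_100: "\<forall>i<4. \<forall>j<4. GA 1 1 0 0 i j = GA 1 1 0 0 j i"
  by (simp add: all4 GA_def mat4_def)

lemma A2_QM_100: "quantum_metric 4 VA2 (GA 1 1 0 0)"
  unfolding QM_iff
  apply (intro conjI)
     apply (simp add: GA_def mat4_def)
    apply (intro allI)
    subgoal for i j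
      using symA_100[rule_format, of i j] by (cases "i < 4 \<and> j < 4") (auto simp: GA_def mat4_def)
   apply (rule exI[of _ "mat4 [[1,0,1,0],[0,1,0,0],[1,0,0,1],[0,0,1,0]]"])
   apply (simp add: all4 sum4 GA_def mat4_def)
  apply (simp add: all4 sum4 GA_def mat4_def VA2_def)
  done

lemma A2_set: "{g. quantum_metric 4 VA2 g} = {GA 1 0 0 1, GA 1 0 1 0, GA 1 1 0 0}"
proof
  show "{g. quantum_metric 4 VA2 g} \<subseteq> {GA 1 0 0 1, GA 1 0 1 0, GA 1 1 0 0}"
  proof
    fix g assume "g \<in> {g. quantum_metric 4 VA2 g}"
    hence Q: "quantum_metric 4 VA2 g" by simp
    from Q[unfolded QM_iff] obtain h where H: "\<forall>i<4. \<forall>j<4. (\<Sum>k<4. h i k * g k j) = (if i = j then 1 else (0::bit))"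
      by blast
    have G: "g = GA (g 0 0) (g 1 1) (g 1 2) (g 2 2)" by (rule A2_form[OF Q])
    have "GA (g 0 0) (g 1 1) (g 1 2) (g 2 2) \<in> {GA 1 0 0 1, GA 1 0 1 0, GA 1 1 0 0}"
      by (rule A2_cls[of h]) (use H G in metis)
    thus "g \<in> {GA 1 0 0 1, GA 1 0 1 0, GA 1 1 0 0}" using G by simp
  qed
next
  show "{GA 1 0 0 1, GA 1 0 1 0, GA 1 1 0 0} \<subseteq> {g. quantum_metric 4 VA2 g}"
    using A2_QM_001 A2_QM_010 A2_QM_100 by auto
qed

lemma A2_card: "card {GA 1 0 0 1, GA 1 0 1 0, GA 1 1 0 0} = 3"
proof -
  have n1: "GA 1 0 0 1 \<noteq> GA 1 0 1 0"
  proof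
    assume "GA 1 0 0 1 = GA 1 0 1 0"
    hence "GA 1 0 0 1 1 2 = GA 1 0 1 0 1 2" by simp
    thus False by (simp add: GA_def mat4_def)
  qed
  have n2: "GA 1 0 0 1 \<noteq> GA 1 1 0 0"
  proof
    assume "GA 1 0 0 1 = GA 1 1 0 0"
    hence "GA 1 0 0 1 1 1 = GA 1 1 0 0 1 1" by simp
    thus False by (simp add: GA_def mat4_def)
  qed
  have n3: "GA 1 0 1 0 \<noteq> GA 1 1 0 0"
  proof
    assume "GA 1 0 1 0 = GA 1 1 0 0"
    hence "GA 1 0 1 0 1 1 = GA 1 1 0 0 1 1" by simp
    thus False by (simp add: GA_def mat4_def)
  qed
  show ?thesis using n1 n2 n3 by simp
qed

theorem mainTheorem11:
  shows "{g. quantum_metric 4 VZ4 g} = gZ4 ` {0..<4} \<union> gZ4c ` {0..<4}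
       \<and> card {g. quantum_metric 4 VZ4 g} = 8
       \<and> card {g. quantum_metric 4 VA2 g} = 3"
  using Z4_set Z4_card A2_set A2_card by simp
end
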